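(* Let $X,k\in\mathbb{N}$ with $k\ge0$ and set $K=2^{k-1}$. Let $P$ be a polynomial of degree $k$ with real coefficients and let $\alpha$ be its leading coefficient. Let $g$ be a real function, $k$ times continuously differentiable on $[X,2X]$, such that $\lvert g^{(r)}(x)\rvert\asymp GX^{-r}$ for $r=1,\dots,k$. Then, for $G$ and $X$ large enough, for arbitrary $\varepsilon>0$, \[\Big\lvert\sum_{X<n\le2X}e(P(n)+g(n))\Big\rvert^{2^{k-1}}\ll X^{2^{k-1}-1}+(1+G)X^{2^{k-1}-k+\varepsilon}\sum_{t=1}^{k!X^{k-1}}\min\Big(X,\frac{1}{\lVert t\alpha\rVert}\Big).\]
   Context: $e(x)=\exp(2\pi ix)$; $\lVert x\rVert$ is the distance from $x$ to the nearest integer; $A\asymp B$ means $A\ll B$ and $B\ll A$. *)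

theory Defs
  imports Complex_Main "HOL-Computational_Algebra.Polynomial"
begin

definition e :: "real \<Rightarrow> complex" where
  "e x = exp (2 * of_real pi * \<i> * of_real x)"

definition dist_int :: "real \<Rightarrow> real" where
  "dist_int x = \<bar>x - of_int (round x)\<bar>"

text \<open>min(X, 1/||y||), with the convention 1/0 = infinity (so the value is X).\<close>
definition min_recip :: "real \<Rightarrow> real \<Rightarrow> real" where
  "min_recip X y = (if dist_int y = 0 then X else min X (1 / dist_int y))"

end

theory Submission
  imports Defs "HOL-Analysis.Analysis" "HOL-Computational_Algebra.Primes"
begin


lemma e_add: "e (x + y) = e x * e y"
  unfolding e_def by (simp add: distrib_left distrib_right exp_add)

lemma norm_e [simp]: "norm (e x) = 1"
  unfolding e_def by (metis mult.commute mult.left_commute norm_exp_i_times of_real_mult of_real_numeral)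

lemma e_int: "e (of_int n) = 1"
proof -
  have "e (of_int n) = exp ((2 * of_int n * pi) * \<i>)" unfolding e_def
    by (simp add: algebra_simps)
  also have "\<dots> = 1" by (rule exp_integer_2pi) simp
  finally show ?thesis .
qed

lemma e_diff: "e (x - y) = e x / e y"
  unfolding e_def by (simp add: exp_diff algebra_simps)

lemma e_nat_mult: "e (real j * b) = e b ^ j"
  unfolding e_def using exp_of_nat_mult[of j "2 * of_real pi * \<i> * of_real b"]
  by (simp add: algebra_simps)

lemma norm_one_minus_cis: "norm (1 - exp (\<i> * of_real t)) = 2 * \<bar>sin (t/2)\<bar>"
proof -
  have "(norm (1 - exp (\<i> * of_real t)))^2 = (1 - cos t)^2 + (sin t)^2"
    by (simp add: cmod_power2 exp_Euler cos_of_real sin_of_real)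
  also have "\<dots> = 2 - 2 * cos t" by (simp add: power2_eq_square algebra_simps sin_squared_eq)
  also have "cos t = 1 - 2 * (sin (t/2))^2" using cos_double_sin[of "t/2"] by simp
  finally have "(norm (1 - exp (\<i> * of_real t)))^2 = (2 * \<bar>sin (t/2)\<bar>)^2" by (simp add: power_mult_distrib)
  thus ?thesis using power2_eq_iff_nonneg[of "norm (1 - exp (\<i> * of_real t))" "2 * \<bar>sin (t/2)\<bar>"]
    by simp
qed

lemma e_as_cis: "e x = exp (\<i> * of_real (2 * pi * x))"
  unfolding e_def by (simp add: algebra_simps)

lemma norm_e_minus_1: "norm (e t - 1) \<le> 2 * pi * \<bar>t\<bar>"
proof -
  have "norm (e t - 1) = norm (1 - e t)" by (simp add: norm_minus_commute)
  also have "\<dots> = 2 * \<bar>sin (pi * t)\<bar>" unfolding e_as_cis norm_one_minus_cis by simp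
  also have "\<dots> \<le> 2 * \<bar>pi * t\<bar>" using abs_sin_x_le_abs_x by simp
  finally show ?thesis by (simp add: abs_mult)
qed

lemma sin_lower: assumes "0 \<le> x" "x \<le> pi/2" shows "x / 3 \<le> sin x"
proof (cases "x \<le> 1")
  case True
  have "\<bar>sin x - (\<Sum>m<3. sin_coeff m * x ^ m)\<bar> \<le> inverse (fact 3) * \<bar>x\<bar> ^ 3"
    by (rule Maclaurin_sin_bound)
  moreover have "(\<Sum>m<3. sin_coeff m * x ^ m) = x"
    by (simp add: numeral_3_eq_3 sin_coeff_def)
  ultimately have "\<bar>sin x - x\<bar> \<le> x^3/6" using assms by (simp add: fact_numeral)
  hence "x - x^3/6 \<le> sin x" by linarith
  moreover have "x^3 \<le> x"
  proof -
    have "x*x \<le> 1" using True assms by (simp add: mult_le_one)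
    hence "x*x*x \<le> 1*x" using assms by (intro mult_right_mono) auto
    thus ?thesis by (simp add: power3_eq_cube)
  qed
  ultimately show ?thesis using assms by linarith
next
  case False
  have "sin 1 \<le> sin x" using False assms by (intro sin_monotone_2pi_le) auto
  moreover have "\<bar>sin 1 - (\<Sum>m<3. sin_coeff m * 1 ^ m)\<bar> \<le> inverse (fact 3) * \<bar>1\<bar> ^ 3"
    by (rule Maclaurin_sin_bound)
  moreover have "(\<Sum>m<3. sin_coeff m * (1::real) ^ m) = 1"
    by (simp add: numeral_3_eq_3 sin_coeff_def)
  ultimately have "5/6 \<le> sin x" by (simp add: fact_numeral)
  moreover have "x \<le> 2" using assms pi_half_less_two by linarith
  ultimately show ?thesis by linarith
qed

lemma dist_int_le: "dist_int x \<le> 1/2"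
  unfolding dist_int_def using of_int_round_abs_le[of x] by (simp add: abs_minus_commute)

lemma dist_int_nonneg: "0 \<le> dist_int x" unfolding dist_int_def by simp

lemma norm_one_minus_e_lower: "2 * dist_int b \<le> norm (1 - e b)"
proof -
  define r where "r = b - of_int (round b)"
  have "e b = e r" unfolding r_def e_diff e_int by simp
  have ar: "\<bar>r\<bar> \<le> 1/2" "dist_int b = \<bar>r\<bar>" using dist_int_le[of b] unfolding r_def dist_int_def by auto
  have neq: "norm (1 - e b) = 2 * \<bar>sin (pi * r)\<bar>" unfolding \<open>e b = e r\<close> by (simp only: e_as_cis norm_one_minus_cis) simp
  have sabs: "\<bar>sin (pi * r)\<bar> = sin (pi * \<bar>r\<bar>)"
  proof (cases "r \<ge> 0")
    case True
    hence "sin (pi * r) \<ge> 0" using ar by (intro sin_ge_zero) auto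
    thus ?thesis using True by simp
  next
    case False
    have "pi * (-r) \<le> pi * 1" using ar False by (intro mult_left_mono) auto
    moreover have "0 \<le> pi * (-r)" using False by (simp add: mult_nonneg_nonpos)
    ultimately have "sin (pi * (-r)) \<ge> 0" by (intro sin_ge_zero) auto
    thus ?thesis using False by simp
  qed
  have sge: "sin (pi * \<bar>r\<bar>) \<ge> pi * \<bar>r\<bar> / 3"
    using ar by (intro sin_lower) auto
  have "norm (1 - e b) \<ge> 2 * (pi/3) * \<bar>r\<bar>" using neq sabs sge by simp
  moreover have "pi / 3 \<ge> 1" using pi_gt3 by simp
  ultimately show ?thesis using ar mult_right_mono[of 1 "pi/3" "\<bar>r\<bar>"] by simp
qed

lemma geom_e: assumes "dist_int b \<noteq> 0" shows "norm (\<Sum>j<m. e (real j * b)) \<le> 1 / dist_int b"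
proof -
  have d: "dist_int b > 0" using assms dist_int_nonneg[of b] by simp
  have ne: "norm (1 - e b) > 0" using norm_one_minus_e_lower[of b] d by linarith
  hence "e b \<noteq> 1" by auto
  have "(\<Sum>j<m. e (real j * b)) = (1 - e b ^ m) / (1 - e b)"
    unfolding e_nat_mult sum_gp_strict using \<open>e b \<noteq> 1\<close> by simp
  hence "norm (\<Sum>j<m. e (real j * b)) = norm (1 - e b ^ m) / norm (1 - e b)"
    by (simp add: norm_divide)
  also have "norm (1 - e b ^ m) \<le> 2"
    using norm_triangle_ineq4[of 1 "e b ^ m"] by (simp add: norm_power)
  hence "norm (1 - e b ^ m) / norm (1 - e b) \<le> 2 / norm (1 - e b)"
    using ne by (simp add: divide_right_mono)
  also have "\<dots> \<le> 2 / (2 * dist_int b)"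
    using ne d norm_one_minus_e_lower[of b] by (intro divide_left_mono) auto
  finally show ?thesis by simp
qed

lemma geom_e_min: assumes "m \<le> M" shows "norm (\<Sum>j<m. e (real j * b)) \<le> min_recip (real M) b"
proof -
  have t: "norm (\<Sum>j<m. e (real j * b)) \<le> real m"
    using norm_sum[of "\<lambda>j. e (real j * b)" "{..<m}"] by simp
  show ?thesis
  proof (cases "dist_int b = 0")
    case True thus ?thesis unfolding min_recip_def using t assms by simp
  next
    case False thus ?thesis unfolding min_recip_def using t assms geom_e[OF False, of m] by simp
  qed
qed




lemma abel_identity:
  fixes a w :: "nat \<Rightarrow> complex"
  shows "(\<Sum>i<Suc m. a i * w i) = (\<Sum>j<Suc m. a j) * w m - (\<Sum>i<m. (\<Sum>j<Suc i. a j) * (w (Suc i) - w i))"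
proof (induction m)
  case 0 thus ?case by simp
next
  case (Suc m)
  show ?case
    apply (subst sum.lessThan_Suc)
    apply (subst Suc)
    apply (subst (3) sum.lessThan_Suc)
    apply (subst (2) sum.lessThan_Suc)
    by (simp add: algebra_simps)
qed

lemma abel_bound:
  fixes a w :: "nat \<Rightarrow> complex"
  assumes "\<And>m'. m' \<le> Suc m \<Longrightarrow> norm (\<Sum>j<m'. a j) \<le> B" and "norm (w m) \<le> 1"
  shows "norm (\<Sum>i<Suc m. a i * w i) \<le> B * (1 + (\<Sum>i<m. norm (w (Suc i) - w i)))"
proof -
  have B0: "B \<ge> 0" using assms(1)[of 0] by simp
  have "norm (\<Sum>i<Suc m. a i * w i) \<le> norm ((\<Sum>j<Suc m. a j) * w m) + norm (\<Sum>i<m. (\<Sum>j<Suc i. a j) * (w (Suc i) - w i))"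
    unfolding abel_identity by (rule norm_triangle_ineq4)
  also have "norm ((\<Sum>j<Suc m. a j) * w m) \<le> B * 1"
    unfolding norm_mult using assms(1)[of "Suc m"] assms(2) B0 by (intro mult_mono) (auto simp del: sum.lessThan_Suc)
  also have "norm (\<Sum>i<m. (\<Sum>j<Suc i. a j) * (w (Suc i) - w i)) \<le> (\<Sum>i<m. B * norm (w (Suc i) - w i))"
  proof (rule order.trans[OF norm_sum], rule sum_mono)
    fix i assume "i \<in> {..<m}"
    hence "norm (\<Sum>j<Suc i. a j) \<le> B" using assms(1)[of "Suc i"] by (simp del: sum.lessThan_Suc)
    thus "norm ((\<Sum>j<Suc i. a j) * (w (Suc i) - w i)) \<le> B * norm (w (Suc i) - w i)"
      unfolding norm_mult by (intro mult_right_mono) auto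
  qed
  finally show ?thesis by (simp add: sum_distrib_left algebra_simps)
qed

lemma min_recip_nonneg: "0 \<le> X \<Longrightarrow> 0 \<le> min_recip X y"
  unfolding min_recip_def using dist_int_nonneg[of y] by auto

lemma expsum_bound:
  fixes \<psi> \<delta> :: "nat \<Rightarrow> real"
  assumes "\<And>i. Suc i < L \<Longrightarrow> \<psi> (Suc i) - \<psi> i = b + \<delta> i" and "L \<le> M"
  shows "norm (\<Sum>i<L. e (\<psi> i)) \<le> min_recip (real M) b * (1 + 2 * pi * (\<Sum>i<L - 1. \<bar>\<delta> i\<bar>))"
proof (cases L)
  case 0 thus ?thesis using min_recip_nonneg[of "real M" b] by simp
next
  case (Suc m)
  define a where "a i = e (real i * b)" for i
  define w where "w i = e (\<psi> i - real i * b)" for i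
  have aw: "a i * w i = e (\<psi> i)" for i unfolding a_def w_def e_add[symmetric] by simp
  have "norm (\<Sum>i<Suc m. a i * w i) \<le> min_recip (real M) b * (1 + (\<Sum>i<m. norm (w (Suc i) - w i)))"
    using Suc assms(2) by (intro abel_bound) (auto simp: a_def w_def intro!: geom_e_min)
  also have "(\<Sum>i<m. norm (w (Suc i) - w i)) \<le> (\<Sum>i<m. 2 * pi * \<bar>\<delta> i\<bar>)"
  proof (rule sum_mono)
    fix i assume "i \<in> {..<m}"
    hence "\<psi> (Suc i) - \<psi> i = b + \<delta> i" using assms(1) Suc by auto
    hence "\<psi> (Suc i) - real (Suc i) * b = (\<psi> i - real i * b) + \<delta> i" by (simp add: algebra_simps)
    hence "w (Suc i) = w i * e (\<delta> i)" unfolding w_def by (simp add: e_add)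
    hence "w (Suc i) - w i = w i * (e (\<delta> i) - 1)" by (simp add: algebra_simps)
    hence "norm (w (Suc i) - w i) = norm (e (\<delta> i) - 1)" by (simp add: w_def norm_mult)
    thus "norm (w (Suc i) - w i) \<le> 2 * pi * \<bar>\<delta> i\<bar>" using norm_e_minus_1 by simp
  qed
  hence "min_recip (real M) b * (1 + (\<Sum>i<m. norm (w (Suc i) - w i))) \<le> min_recip (real M) b * (1 + (\<Sum>i<m. 2 * pi * \<bar>\<delta> i\<bar>))"
    by (intro mult_left_mono min_recip_nonneg) auto
  finally show ?thesis using Suc aw by (simp add: sum_distrib_left)
qed




definition W :: "nat \<Rightarrow> (nat \<Rightarrow> real) \<Rightarrow> complex" where
  "W L \<phi> = (\<Sum>i<L. e (\<phi> i))"

definition dshift :: "nat \<Rightarrow> (nat \<Rightarrow> real) \<Rightarrow> nat \<Rightarrow> real" where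
  "dshift h \<phi> i = \<phi> (i + h) - \<phi> i"

fun difs :: "nat list \<Rightarrow> (nat \<Rightarrow> real) \<Rightarrow> nat \<Rightarrow> real" where
  "difs [] \<phi> = \<phi>"
| "difs (h # hs) \<phi> = dshift h (difs hs \<phi>)"

lemma sq_identity:
  fixes z :: "nat \<Rightarrow> complex"
  assumes "\<And>i. z i * cnj (z i) = 1"
  shows "(\<Sum>i<L. z i) * cnj (\<Sum>i<L. z i) = of_nat L + (\<Sum>j<L. \<Sum>i<j. z j * cnj (z i)) + cnj (\<Sum>j<L. \<Sum>i<j. z j * cnj (z i))"
proof (induction L)
  case 0 thus ?case by simp
next
  case (Suc L)
  have e1: "(\<Sum>i<Suc L. z i) * cnj (\<Sum>i<Suc L. z i) = (\<Sum>i<L. z i) * cnj (\<Sum>i<L. z i) + z L * cnj (z L)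
     + z L * cnj (\<Sum>i<L. z i) + (\<Sum>i<L. z i) * cnj (z L)"
    by (simp add: algebra_simps)
  have e2: "z L * cnj (\<Sum>i<L. z i) = (\<Sum>i<L. z L * cnj (z i))"
    by (simp add: sum_distrib_left cnj_sum)
  have e3: "(\<Sum>i<L. z i) * cnj (z L) = cnj (\<Sum>i<L. z L * cnj (z i))"
    by (simp add: cnj_sum sum_distrib_right sum_distrib_left algebra_simps)
  show ?case unfolding e1 e2 e3 Suc assms by (simp add: cnj_sum algebra_simps)
qed

lemma triangle_regroup:
  fixes F :: "nat \<Rightarrow> nat \<Rightarrow> complex"
  shows "(\<Sum>j<L. \<Sum>i<j. F i j) = (\<Sum>h\<in>{1..<L}. \<Sum>i<L-h. F i (i + h))"
proof -
  have "(\<Sum>j<L. \<Sum>i<j. F i j) = (\<Sum>(j,i)\<in>Sigma {..<L} (\<lambda>j. {..<j}). F i j)"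
    by (simp add: sum.Sigma)
  also have "\<dots> = (\<Sum>(h,i)\<in>Sigma {1..<L} (\<lambda>h. {..<L-h}). F i (i + h))"
  proof (rule sum.reindex_bij_witness[where i="\<lambda>(h,i). (i+h, i)" and j="\<lambda>(j,i). (j - i, i)"])
  qed auto
  also have "\<dots> = (\<Sum>h\<in>{1..<L}. \<Sum>i<L-h. F i (i + h))"
    by (simp add: sum.Sigma)
  finally show ?thesis .
qed

lemma e_cnj: "cnj (e x) = e (- x)"
  unfolding e_def by (simp add: exp_cnj)

lemma e_mult_cnj: "e x * cnj (e x) = 1"
  unfolding e_cnj e_add[symmetric] by (simp add: e_def)

lemma weyl_basic:
  "(norm (W L \<phi>))^2 \<le> real L + 2 * (\<Sum>h\<in>{1..<L}. norm (W (L - h) (dshift h \<phi>)))"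
proof -
  define z where "z i = e (\<phi> i)" for i
  define T where "T = (\<Sum>j<L. \<Sum>i<j. z j * cnj (z i))"
  have zz: "z i * cnj (z i) = 1" for i unfolding z_def by (rule e_mult_cnj)
  have "complex_of_real ((norm (W L \<phi>))^2) = W L \<phi> * cnj (W L \<phi>)"
    using complex_norm_square[of "W L \<phi>"] by simp
  also have "\<dots> = of_nat L + T + cnj T" unfolding W_def T_def z_def[symmetric] by (rule sq_identity[OF zz])
  also have "\<dots> = of_real (real L + 2 * Re T)" by (simp add: complex_eq_iff)
  finally have eq: "(norm (W L \<phi>))^2 = real L + 2 * Re T" by (simp only: of_real_eq_iff)
  have "T = (\<Sum>h\<in>{1..<L}. W (L - h) (dshift h \<phi>))"
    unfolding T_def triangle_regroup W_def dshift_def z_def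
    by (intro sum.cong refl) (simp add: e_cnj e_add[symmetric])
  hence "Re T \<le> (\<Sum>h\<in>{1..<L}. norm (W (L - h) (dshift h \<phi>)))"
    using complex_Re_le_cmod[of T] norm_sum[of "\<lambda>h. W (L - h) (dshift h \<phi>)" "{1..<L}"] by simp
  thus ?thesis using eq by simp
qed




definition H :: "nat \<Rightarrow> nat \<Rightarrow> nat list set" where
  "H j L = {hs. set hs \<subseteq> {1..<L} \<and> length hs = j}"

lemma finite_H: "finite (H j L)"
  unfolding H_def by (rule finite_lists_length_eq) simp

lemma card_H: "card (H j L) = (L - 1) ^ j"
  unfolding H_def using card_lists_length_eq[of "{1..<L}" j] by simp

lemma card_H_le: "real (card (H j L)) \<le> real L ^ j"
  unfolding card_H by (simp add: power_mono)

lemma sum_H_Suc: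
  fixes F :: "nat list \<Rightarrow> real"
  shows "(\<Sum>hs\<in>H (Suc j) L. F hs) = (\<Sum>hs\<in>H j L. \<Sum>h\<in>{1..<L}. F (h # hs))"
proof -
  have img: "H (Suc j) L = (\<lambda>(h,hs). h # hs) ` ({1..<L} \<times> H j L)"
  proof
    show "H (Suc j) L \<subseteq> (\<lambda>(h,hs). h # hs) ` ({1..<L} \<times> H j L)"
    proof
      fix xs assume "xs \<in> H (Suc j) L"
      then obtain h hs where "xs = h # hs" "h \<in> {1..<L}" "hs \<in> H j L"
        unfolding H_def by (cases xs) auto
      thus "xs \<in> (\<lambda>(h,hs). h # hs) ` ({1..<L} \<times> H j L)" by force
    qed
  qed (auto simp: H_def)
  have inj: "inj_on (\<lambda>(h,hs). h # hs) ({1..<L} \<times> H j L)" by (auto simp: inj_on_def)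
  have "(\<Sum>hs\<in>H (Suc j) L. F hs) = (\<Sum>(h,hs)\<in>{1..<L} \<times> H j L. F (h # hs))"
    unfolding img by (subst sum.reindex[OF inj]) (simp add: case_prod_unfold)
  also have "\<dots> = (\<Sum>h\<in>{1..<L}. \<Sum>hs\<in>H j L. F (h # hs))"
    by (rule sum.cartesian_product[symmetric])
  also have "\<dots> = (\<Sum>hs\<in>H j L. \<Sum>h\<in>{1..<L}. F (h # hs))"
    by (rule sum.swap)
  finally show ?thesis .
qed

lemma W_0 [simp]: "W 0 \<phi> = 0" unfolding W_def by simp

lemma weyl_step:
  "(norm (W (L - sum_list hs) (difs hs \<phi>)))^2 \<le> real L + 2 * (\<Sum>h\<in>{1..<L}. norm (W (L - sum_list (h # hs)) (difs (h # hs) \<phi>)))"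
proof -
  let ?M = "L - sum_list hs"
  have "(norm (W ?M (difs hs \<phi>)))^2 \<le> real ?M + 2 * (\<Sum>h\<in>{1..<?M}. norm (W (?M - h) (dshift h (difs hs \<phi>))))"
    by (rule weyl_basic)
  also have "(\<Sum>h\<in>{1..<?M}. norm (W (?M - h) (dshift h (difs hs \<phi>)))) \<le> (\<Sum>h\<in>{1..<L}. norm (W (?M - h) (dshift h (difs hs \<phi>))))"
    by (rule sum_mono2) auto
  finally show ?thesis by (simp add: diff_diff_add add.commute)
qed

lemma weyl_iter:
  "\<exists>C>0. \<forall>L \<phi>. (norm (W L \<phi>))^(2^j) \<le> C * (real L ^ (2^j - 1) + real L ^ (2^j - j - 1) *
      (\<Sum>hs\<in>H j L. norm (W (L - sum_list hs) (difs hs \<phi>))))"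
proof (induction j)
  case 0
  have "H 0 L = {[]}" for L unfolding H_def by auto
  thus ?case by (intro exI[of _ 1]) auto
next
  case (Suc j)
  then obtain C where C: "C > 0" and IH: "\<And>L \<phi>. (norm (W L \<phi>))^(2^j) \<le> C * (real L ^ (2^j - 1) + real L ^ (2^j - j - 1) *
      (\<Sum>hs\<in>H j L. norm (W (L - sum_list hs) (difs hs \<phi>))))" by blast
  show ?case
  proof (intro exI[of _ "4 * C^2"] conjI allI)
    show "4 * C^2 > 0" using C by simp
    fix L \<phi>
    define n where "n = (2::nat)^j"
    have jn: "j + 1 \<le> n" unfolding n_def using less_exp[of j] by (simp add: Suc_le_eq)
    define w where "w hs = norm (W (L - sum_list hs) (difs hs \<phi>))" for hs
    define R where "R = (\<Sum>hs\<in>H j L. w hs)"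
    define R' where "R' = (\<Sum>hs\<in>H (Suc j) L. w hs)"
    have R0: "R \<ge> 0" unfolding R_def w_def by (simp add: sum_nonneg)
    have R'0: "R' \<ge> 0" unfolding R'_def w_def by (simp add: sum_nonneg)
    show "(norm (W L \<phi>))^(2^Suc j) \<le> 4 * C^2 * (real L ^ (2^Suc j - 1) + real L ^ (2^Suc j - Suc j - 1) * R')"
      unfolding R'_def[symmetric] w_def[symmetric]
    proof (cases "L = 0")
      case True
      have lhs: "(norm (W L \<phi>))^(2^Suc j) = 0" using True by simp
      show ?thesis unfolding lhs using R'0 by (intro mult_nonneg_nonneg add_nonneg_nonneg) auto
    next
      case False
      hence L1: "real L \<ge> 1" by simp
      define A where "A = real L ^ (n - 1)"
      define a where "a = n - j - 1"
      have A0: "A \<ge> 0" unfolding A_def by simp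
      have "(norm (W L \<phi>))^(2^Suc j) = ((norm (W L \<phi>))^n)^2"
        unfolding n_def by (simp add: power_mult[symmetric] mult.commute)
      also have "\<dots> \<le> (C * (A + real L ^ a * R))^2"
        using IH[of L \<phi>] unfolding A_def a_def R_def w_def n_def by (intro power_mono) auto
      also have "\<dots> \<le> 2 * C^2 * (A^2 + (real L ^ a)^2 * R^2)"
      proof -
        have "(A + real L ^ a * R)^2 \<le> 2 * (A^2 + (real L ^ a * R)^2)"
          using sum_squared_le_sum_of_squares_2[of A "real L ^ a * R"]
          by (smt (verit, ccfv_threshold) zero_le_power2 power2_sum mult_2 sum_squares_bound)
        hence "C^2 * (A + real L ^ a * R)^2 \<le> C^2 * (2 * (A^2 + (real L ^ a * R)^2))"
          by (intro mult_left_mono) auto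
        moreover have "(C * (A + real L ^ a * R))^2 = C^2 * (A + real L ^ a * R)^2"
          by (simp add: power_mult_distrib)
        ultimately show ?thesis by (simp add: power_mult_distrib algebra_simps)
      qed
      also have "R^2 \<le> real L ^ j * (real L ^ (j+1) + 2 * R')"
      proof -
        have s1: "R^2 \<le> (\<Sum>hs\<in>H j L. (w hs)^2) * real L ^ j"
        proof -
          have "R^2 \<le> (\<Sum>hs\<in>H j L. (w hs)^2) * card (H j L)"
            unfolding R_def by (rule sum_squared_le_sum_of_squares)
          also have "\<dots> \<le> (\<Sum>hs\<in>H j L. (w hs)^2) * real L ^ j"
            by (intro mult_left_mono card_H_le sum_nonneg) auto
          finally show ?thesis .
        qed
        have "(\<Sum>hs\<in>H j L. (w hs)^2) \<le> (\<Sum>hs\<in>H j L. real L + 2 * (\<Sum>h\<in>{1..<L}. w (h # hs)))"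
          unfolding w_def by (rule sum_mono, rule weyl_step)
        also have "\<dots> = real (card (H j L)) * real L + 2 * R'"
          unfolding R'_def sum_H_Suc by (simp add: sum.distrib sum_distrib_left)
        also have "\<dots> \<le> real L ^ j * real L + 2 * R'"
          by (intro add_right_mono mult_right_mono card_H_le) auto
        finally have s2: "(\<Sum>hs\<in>H j L. (w hs)^2) \<le> real L ^ j * real L + 2 * R'" .
        have "R^2 \<le> (real L ^ j * real L + 2 * R') * real L ^ j"
          using s1 mult_right_mono[OF s2, of "real L ^ j"] by simp
        thus ?thesis by (simp add: algebra_simps)
      qed
      hence "2 * C^2 * (A^2 + (real L ^ a)^2 * R^2) \<le> 2 * C^2 * (A^2 + (real L ^ a)^2 * (real L ^ j * (real L ^ (j+1) + 2 * R')))"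
        by (intro mult_left_mono add_left_mono) auto
      also have "\<dots> = 2 * C^2 * (A^2 + real L ^ (2*a + 2*j + 1) + 2 * real L ^ (2*a + j) * R')"
        by (simp add: power_add power_mult algebra_simps power2_eq_square)
      also have "2*a + 2*j + 1 = 2^Suc j - 1" using jn unfolding a_def n_def by simp
      also have "2*a + j = 2^Suc j - Suc j - 1" using jn unfolding a_def n_def by simp
      also have "A^2 \<le> real L ^ (2^Suc j - 1)"
      proof -
        have "A^2 = real L ^ (2 * (n - 1))" unfolding A_def by (simp add: power_mult[symmetric] mult.commute)
        also have "\<dots> \<le> real L ^ (2^Suc j - 1)" using L1 jn unfolding n_def by (intro power_increasing) auto
        finally show ?thesis .
      qed
      finally show ?thesis using C R'0 by (simp add: algebra_simps)
    qed
  qed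
qed




fun rdif :: "nat list \<Rightarrow> (real \<Rightarrow> real) \<Rightarrow> real \<Rightarrow> real" where
  "rdif [] f = f"
| "rdif (h # hs) f = (\<lambda>x. rdif hs f (x + real h) - rdif hs f x)"

lemma difs_rdif:
  assumes "\<And>i. \<phi> i = f (real (c + i))"
  shows "difs hs \<phi> i = rdif hs f (real (c + i))"
  using assms
proof (induction hs arbitrary: i)
  case Nil thus ?case by simp
next
  case (Cons h hs)
  thus ?case by (simp add: dshift_def add.assoc)
qed

lemma rdif_add: "rdif hs (\<lambda>x. f x + g x) x = rdif hs f x + rdif hs g x"
  by (induction hs arbitrary: x) auto

lemma rdif_cong:
  assumes "\<And>y. x \<le> y \<Longrightarrow> y \<le> x + real (sum_list hs) \<Longrightarrow> f y = g y"
  shows "rdif hs f x = rdif hs g x"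
  using assms
proof (induction hs arbitrary: x)
  case Nil thus ?case by simp
next
  case (Cons h hs)
  have "rdif hs f (x + real h) = rdif hs g (x + real h)"
    by (rule Cons.IH) (use Cons.prems in auto)
  moreover have "rdif hs f x = rdif hs g x"
    by (rule Cons.IH) (use Cons.prems in auto)
  ultimately show ?case by simp
qed

lemma rdif_deriv:
  assumes der: "\<And>y. y \<in> {a..b} \<Longrightarrow> (f has_real_derivative f' y) (at y within {a..b})"
  shows "y \<in> {a..b - real (sum_list hs)} \<Longrightarrow> (rdif hs f has_real_derivative rdif hs f' y) (at y within {a..b - real (sum_list hs)})"
proof (induction hs arbitrary: y)
  case Nil thus ?case using der by simp
next
  case (Cons h hs)
  let ?S = "{a..b - real (sum_list (h # hs))}"
  let ?T = "{a..b - real (sum_list hs)}"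
  have sub: "?S \<subseteq> ?T" by auto
  have img: "(\<lambda>y. y + real h) ` ?S \<subseteq> ?T" by auto
  have y1: "y + real h \<in> ?T" "y \<in> ?T" using Cons.prems by auto
  have d1: "(rdif hs f \<circ> (\<lambda>y. y + real h) has_real_derivative rdif hs f' (y + real h) * 1) (at y within ?S)"
    by (rule DERIV_image_chain, rule DERIV_subset[OF Cons.IH[OF y1(1)] img])
      (auto intro!: derivative_eq_intros)
  have d2: "(rdif hs f has_real_derivative rdif hs f' y) (at y within ?S)"
    by (rule DERIV_subset[OF Cons.IH[OF y1(2)] sub])
  show ?case using DERIV_diff[OF d1 d2] by (simp add: o_def)
qed

lemma rdif_mvt:
  fixes D :: "nat \<Rightarrow> real \<Rightarrow> real"
  assumes der: "\<And>r y. r < length hs \<Longrightarrow> y \<in> {a..b} \<Longrightarrow> (D (m + r) has_real_derivative D (Suc (m + r)) y) (at y within {a..b})"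
    and "a \<le> x" and "x + real (sum_list hs) \<le> b"
  shows "\<exists>\<xi>\<in>{a..b}. rdif hs (D m) x = real (prod_list hs) * D (m + length hs) \<xi>"
  using assms
proof (induction hs arbitrary: m x)
  case Nil thus ?case by (intro bexI[of _ x]) auto
next
  case (Cons h hs)
  let ?\<psi> = "rdif hs (D m)"
  let ?\<psi>' = "rdif hs (D (Suc m))"
  show ?case
  proof (cases "h = 0")
    case True thus ?thesis using Cons.prems by (intro bexI[of _ x]) auto
  next
    case False
    hence xl: "x < x + real h" by simp
    have dm: "\<And>y. y \<in> {a..b} \<Longrightarrow> (D m has_real_derivative D (Suc m) y) (at y within {a..b})"
      using Cons.prems(1)[of 0] by simp
    have "\<exists>\<eta>\<in>{x<..<x + real h}. ?\<psi> (x + real h) - ?\<psi> x = (\<lambda>d. ?\<psi>' \<eta> * d) (x + real h - x)"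
    proof (rule mvt_simple[OF xl])
      fix y assume y: "x \<le> y" "y \<le> x + real h"
      have "y \<in> {a..b - real (sum_list hs)}" using y Cons.prems by auto
      from rdif_deriv[OF dm this]
      have "(?\<psi> has_real_derivative ?\<psi>' y) (at y within {x..x + real h})"
        by (rule DERIV_subset) (use Cons.prems in auto)
      thus "(?\<psi> has_derivative (\<lambda>d. ?\<psi>' y * d)) (at y within {x..x + real h})"
        by (simp add: has_field_derivative_def)
    qed
    then obtain \<eta> where eta: "\<eta> \<in> {x<..<x + real h}" "?\<psi> (x + real h) - ?\<psi> x = ?\<psi>' \<eta> * real h"
      by auto
    have "\<exists>\<xi>\<in>{a..b}. ?\<psi>' \<eta> = real (prod_list hs) * D (Suc m + length hs) \<xi>"
    proof (rule Cons.IH)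
      fix r y assume "r < length hs" "y \<in> {a..b}"
      thus "(D (Suc m + r) has_real_derivative D (Suc (Suc m + r)) y) (at y within {a..b})"
        using Cons.prems(1)[of "Suc r" y] by simp
    qed (use eta Cons.prems in auto)
    then obtain \<xi> where "\<xi> \<in> {a..b}" "?\<psi>' \<eta> = real (prod_list hs) * D (Suc m + length hs) \<xi>" by blast
    thus ?thesis using eta by (intro bexI[of _ \<xi>]) auto
  qed
qed




definition dcount :: "nat \<Rightarrow> nat" where "dcount n = card {d. d dvd n}"

lemma dcount_mult_le:
  assumes "m > 0" "n > 0"
  shows "dcount (m * n) \<le> dcount m * dcount n"
proof -
  let ?f = "\<lambda>e. (gcd e m, e div gcd e m)"
  have "inj_on ?f {d. d dvd m * n}"
  proof (rule inj_onI)
    fix x y assume "?f x = ?f y"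
    hence "gcd x m = gcd y m" "x div gcd x m = y div gcd y m" by auto
    thus "x = y" by (metis dvd_div_mult_self gcd_dvd1)
  qed
  moreover have "?f ` {d. d dvd m * n} \<subseteq> {d. d dvd m} \<times> {d. d dvd n}"
  proof
    fix z assume "z \<in> ?f ` {d. d dvd m * n}"
    then obtain x where x: "x dvd m * n" "z = ?f x" by auto
    define g where "g = gcd x m"
    have g0: "g > 0" unfolding g_def using assms by simp
    have cop: "coprime (x div g) (m div g)" unfolding g_def using assms by (intro div_gcd_coprime) auto
    have "x = g * (x div g)" "m = g * (m div g)" unfolding g_def by auto
    hence "g * (x div g) dvd g * ((m div g) * n)" using x(1) by (metis mult.assoc)
    hence "x div g dvd (m div g) * n" using g0 by simp
    hence "x div g dvd n" using cop by (simp add: coprime_dvd_mult_right_iff)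
    thus "z \<in> {d. d dvd m} \<times> {d. d dvd n}" using x(2) g_def by auto
  qed
  ultimately have "card {d. d dvd m * n} \<le> card ({d. d dvd m} \<times> {d. d dvd n})"
    using assms by (intro card_inj_on_le) auto
  thus ?thesis unfolding dcount_def card_cartesian_product .
qed

lemma dcount_prime_pow:
  assumes "prime p" shows "dcount (p ^ a) = Suc a"
proof -
  have "{d. d dvd p ^ a} = (\<lambda>i. p ^ i) ` {..a}"
    using divides_primepow_nat[OF assms] by auto
  moreover have "inj_on (\<lambda>i. p ^ i) {..a}"
    using assms prime_gt_1_nat[OF assms] by (intro inj_onI) (simp add: power_inject_exp)
  ultimately show ?thesis unfolding dcount_def by (simp add: card_image)
qed

lemma dcount_one [simp]: "dcount 1 = 1" unfolding dcount_def by simp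

lemma aux_exp: fixes t :: real assumes "t > 0"
  shows "real (Suc a) \<le> max 1 (1/t) * (1 + real a * t)"
proof (cases "t \<ge> 1")
  case True
  hence "real a \<le> real a * t" by (simp add: mult_le_cancel_left1)
  thus ?thesis using True by simp
next
  case False
  hence "max 1 (1/t) = 1/t" using assms by simp
  moreover have "1/t * (1 + real a * t) = 1/t + real a" using assms by (simp add: field_simps)
  moreover have "1/t \<ge> 1" using False assms by simp
  ultimately show ?thesis by simp
qed

lemma dcount_bound_aux:
  fixes \<delta> :: real
  assumes d: "\<delta> > 0"
  defines "c \<equiv> max 1 (1 / (\<delta> * ln 2))"
  shows "n \<ge> 1 \<Longrightarrow> real (dcount n) \<le> c ^ card {p. prime p \<and> p dvd n \<and> real p powr \<delta> < 2} * real n powr \<delta>"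
proof (induction n rule: less_induct)
  case (less n)
  let ?S = "\<lambda>n. {p. prime p \<and> p dvd n \<and> real p powr \<delta> < 2}"
  have c1: "c \<ge> 1" unfolding c_def by simp
  show ?case
  proof (cases "n = 1")
    case True
    have "?S 1 = {}" by auto
    thus ?thesis using True by (simp only: dcount_one card.empty power_0) simp
  next
    case False
    then obtain p where p: "prime p" "p dvd n" using prime_factor_nat by blast
    define a where "a = multiplicity p n"
    define y where "y = n div p ^ a"
    have y: "n = p ^ a * y" "\<not> p dvd y"
      unfolding y_def a_def using multiplicity_decompose[of n p] multiplicity_dvd[of p n] less.prems
        prime_gt_1_nat[OF p(1)] by auto
    have n0: "n > 0" using less.prems by simp
    have a1: "a \<ge> 1" unfolding a_def using p n0 multiplicity_gt_zero_iff[of n p] prime_gt_1_nat[OF p(1)] by (simp add: Suc_le_eq)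
    have p2: "p \<ge> 2" using p prime_ge_2_nat by blast
    have y0: "y \<ge> 1" using y n0 by (cases y) auto
    have "p ^ 1 \<le> p ^ a" using p2 a1 by (intro power_increasing) auto
    hence pa: "p ^ a \<ge> 2" using p2 by simp
    have yn: "y < n"
    proof -
      have "1 * y < p ^ a * y" using pa y0 by (intro mult_strict_right_mono) auto
      thus ?thesis using y(1) by simp
    qed
    have IH: "real (dcount y) \<le> c ^ card (?S y) * real y powr \<delta>" using less.IH[OF yn y0] .
    have dn: "real (dcount n) \<le> real (Suc a) * real (dcount y)"
    proof -
      have "dcount n \<le> dcount (p ^ a) * dcount y" unfolding y(1) using p2 y0 by (intro dcount_mult_le) auto
      hence "dcount n \<le> Suc a * dcount y" unfolding dcount_prime_pow[OF p(1)] .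
      hence "real (dcount n) \<le> real (Suc a * dcount y)" by (simp only: of_nat_le_iff)
      thus ?thesis by (simp only: of_nat_mult)
    qed
    have fin: "finite (?S n)" by (rule finite_subset[of _ "{..n}"]) (use n0 in \<open>auto dest: dvd_imp_le\<close>)
    have sub: "?S y \<subseteq> ?S n" using y(1) by auto
    have npow: "real n powr \<delta> = (real p powr \<delta>) ^ a * real y powr \<delta>"
    proof -
      have "real n powr \<delta> = real (p ^ a) powr \<delta> * real y powr \<delta>"
        unfolding y(1) of_nat_mult by (rule powr_mult) 
      also have "real (p ^ a) powr \<delta> = (real p powr \<delta>) ^ a"
      proof -
        have "real (p ^ a) powr \<delta> = (real p powr real a) powr \<delta>" using p2 by (simp add: powr_realpow)
        also have "\<dots> = (real p powr \<delta>) powr real a" by (simp add: powr_powr mult.commute)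
        also have "\<dots> = (real p powr \<delta>) ^ a" using p2 by (simp add: powr_realpow)
        finally show ?thesis .
      qed
      finally show ?thesis .
    qed
    show ?thesis
    proof (cases "real p powr \<delta> < 2")
      case True
      have "p \<in> ?S n - ?S y" using True p y by auto
      hence "?S y \<subset> ?S n" using sub by blast
      hence cs: "card (?S y) + 1 \<le> card (?S n)" using fin by (simp add: psubset_card_mono Suc_le_eq)
      define t where "t = \<delta> * ln 2"
      have t0: "t > 0" unfolding t_def using d by simp
      have q1: "(real p powr \<delta>) ^ a = exp (real a * (\<delta> * ln (real p)))"
        using p2 by (simp add: powr_def exp_of_nat_mult[symmetric])
      have q2: "exp (real a * (\<delta> * ln (real p))) \<ge> 1 + real a * (\<delta> * ln (real p))" by (rule exp_ge_add_one_self)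
      have q3: "real a * (\<delta> * ln (real p)) \<ge> real a * t" unfolding t_def
        using p2 d by (intro mult_left_mono) auto
      have pa_lb: "(real p powr \<delta>) ^ a \<ge> 1 + real a * t" using q1 q2 q3 by linarith
      have "real (dcount n) \<le> real (Suc a) * (c ^ card (?S y) * real y powr \<delta>)"
        by (rule order.trans[OF dn mult_left_mono[OF IH]]) simp
      also have "real (Suc a) \<le> c * (real p powr \<delta>) ^ a"
      proof -
        have "real (Suc a) \<le> c * (1 + real a * t)" using aux_exp[OF t0, of a] unfolding c_def t_def .
        also have "\<dots> \<le> c * (real p powr \<delta>) ^ a" using pa_lb c1 by (intro mult_left_mono) auto
        finally show ?thesis .
      qed
      hence "real (Suc a) * (c ^ card (?S y) * real y powr \<delta>) \<le> c * (real p powr \<delta>) ^ a * (c ^ card (?S y) * real y powr \<delta>)"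
        using c1 by (intro mult_right_mono mult_nonneg_nonneg) auto
      also have "\<dots> = c ^ (card (?S y) + 1) * real n powr \<delta>" unfolding npow by (simp add: algebra_simps)
      also have "\<dots> \<le> c ^ card (?S n) * real n powr \<delta>"
        using c1 cs by (intro mult_right_mono power_increasing) auto
      finally show ?thesis .
    next
      case False
      have "real (Suc a) \<le> 2 ^ a" by (induction a) auto
      also have "\<dots> \<le> (real p powr \<delta>) ^ a" using False by (intro power_mono) auto
      finally have sa: "real (Suc a) \<le> (real p powr \<delta>) ^ a" .
      have "real (dcount n) \<le> real (Suc a) * (c ^ card (?S y) * real y powr \<delta>)"
        by (rule order.trans[OF dn mult_left_mono[OF IH]]) simp
      also have "\<dots> \<le> (real p powr \<delta>) ^ a * (c ^ card (?S y) * real y powr \<delta>)"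
        using sa c1 by (intro mult_right_mono mult_nonneg_nonneg) auto
      also have "\<dots> = c ^ card (?S y) * real n powr \<delta>" unfolding npow by (simp add: algebra_simps)
      also have "\<dots> \<le> c ^ card (?S n) * real n powr \<delta>"
        using c1 card_mono[OF fin sub] by (intro mult_right_mono power_increasing) auto
      finally show ?thesis .
    qed
  qed
qed

lemma divisor_bound:
  fixes \<delta> :: real assumes "\<delta> > 0"
  shows "\<exists>C>0. \<forall>n\<ge>1. real (dcount n) \<le> C * real n powr \<delta>"
proof -
  define c where "c = max 1 (1 / (\<delta> * ln 2))"
  define N where "N = nat \<lceil>2 powr (1/\<delta>)\<rceil>"
  have c1: "c \<ge> 1" unfolding c_def by simp
  show ?thesis
  proof (intro exI[of _ "c ^ Suc N"] conjI allI impI)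
    show "c ^ Suc N > 0" using c1 by simp
    fix n :: nat assume n: "n \<ge> 1"
    let ?S = "{p. prime p \<and> p dvd n \<and> real p powr \<delta> < 2}"
    have "?S \<subseteq> {..N}"
    proof
      fix p assume "p \<in> ?S"
      hence pp: "real p powr \<delta> < 2" "prime p" by auto
      have "real p = (real p powr \<delta>) powr (1/\<delta>)" using assms pp(2) by (simp add: powr_powr prime_gt_0_nat)
      also have "\<dots> \<le> 2 powr (1/\<delta>)" using pp assms by (intro powr_mono2) auto
      finally have "real p \<le> 2 powr (1/\<delta>)" .
      hence "int p \<le> \<lceil>2 powr (1/\<delta>)\<rceil>" using ceiling_mono[of "real p"] by fastforce
      thus "p \<in> {..N}" unfolding N_def by (simp add: le_nat_iff)
    qed
    hence "card ?S \<le> Suc N" using card_mono[of "{..N}" ?S] by simp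
    hence "c ^ card ?S \<le> c ^ Suc N" using c1 by (intro power_increasing) auto
    moreover have "real (dcount n) \<le> c ^ card ?S * real n powr \<delta>"
      unfolding c_def using dcount_bound_aux[OF assms n] by simp
    ultimately show "real (dcount n) \<le> c ^ Suc N * real n powr \<delta>"
      by (meson mult_right_mono powr_ge_zero order.trans)
  qed
qed




lemma coeff_pderiv_iter:
  fixes p :: "real poly"
  shows "coeff ((pderiv ^^ r) p) n = fact (n + r) / fact n * coeff p (n + r)"
proof (induction r arbitrary: n)
  case 0 thus ?case by simp
next
  case (Suc r)
  have "coeff ((pderiv ^^ Suc r) p) n = real (Suc n) * coeff ((pderiv ^^ r) p) (Suc n)"
    by (simp add: coeff_pderiv)
  also have "\<dots> = real (Suc n) * (fact (Suc n + r) / fact (Suc n) * coeff p (Suc n + r))"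
    by (simp only: Suc.IH)
  also have "\<dots> = fact (n + Suc r) / fact n * coeff p (n + Suc r)"
  proof -
    have e: "Suc n + r = n + Suc r" by simp
    have f: "(fact (Suc n) :: real) = real (Suc n) * fact n" by (rule fact_Suc)
    show ?thesis unfolding e f by (simp add: field_simps del: fact_Suc of_nat_Suc)
  qed
  finally show ?case .
qed

lemma poly_pderiv_iter_degree:
  fixes p :: "real poly"
  assumes "degree p = k"
  shows "poly ((pderiv ^^ k) p) x = fact k * lead_coeff p"
proof -
  let ?q = "(pderiv ^^ k) p"
  have "coeff ?q n = 0" if "n > 0" for n
    using that assms by (simp add: coeff_pderiv_iter coeff_eq_0)
  hence "degree ?q \<le> 0" by (intro degree_le) auto
  hence "?q = [:coeff ?q 0:]" by (metis degree_0_id le_zero_eq)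
  hence "poly ?q x = coeff ?q 0" by (metis poly_pCons mult_zero_right poly_0 add.right_neutral)
  also have "\<dots> = fact k * lead_coeff p" using assms by (simp add: coeff_pderiv_iter)
  finally show ?thesis .
qed

lemma poly_pderiv_iter_deriv:
  fixes p :: "real poly"
  shows "(poly ((pderiv ^^ r) p) has_real_derivative poly ((pderiv ^^ Suc r) p) y) (at y within S)"
  using poly_DERIV[of "(pderiv ^^ r) p" y] by (simp add: has_field_derivative_at_within)

lemma dvd_prod_list_nat: "(h::nat) \<in> set hs \<Longrightarrow> h dvd prod_list hs"
  by (induction hs) auto

lemma mult_count:
  assumes "t > 0"
  shows "card {hs \<in> H j L. K * prod_list hs = t} \<le> dcount t ^ j"
proof -
  have "{hs \<in> H j L. K * prod_list hs = t} \<subseteq> {hs. set hs \<subseteq> {d. d dvd t} \<and> length hs = j}"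
  proof
    fix hs assume hs: "hs \<in> {hs \<in> H j L. K * prod_list hs = t}"
    have "h dvd t" if "h \<in> set hs" for h
    proof -
      have "h dvd prod_list hs" using that by (rule dvd_prod_list_nat)
      also have "prod_list hs dvd t" using hs by auto
      finally show ?thesis .
    qed
    thus "hs \<in> {hs. set hs \<subseteq> {d. d dvd t} \<and> length hs = j}" using hs by (auto simp: H_def)
  qed
  moreover have "finite {hs. set hs \<subseteq> {d. d dvd t} \<and> length hs = j}"
    using assms by (intro finite_lists_length_eq) simp
  ultimately have "card {hs \<in> H j L. K * prod_list hs = t} \<le> card {hs. set hs \<subseteq> {d. d dvd t} \<and> length hs = j}"
    by (rule card_mono[rotated])
  moreover have "finite {d. d dvd t}" using assms by simp
  ultimately show ?thesis unfolding dcount_def using card_lists_length_eq[of "{d. d dvd t}" j] by simp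
qed

lemma regroup:
  fixes F :: "nat \<Rightarrow> real"
  assumes F0: "\<And>t. F t \<ge> 0" and K: "K \<ge> 1" and L: "L \<ge> 1"
  shows "(\<Sum>hs\<in>H j L. F (K * prod_list hs)) \<le> (\<Sum>t\<in>{1..K * L ^ j}. real (dcount t ^ j) * F t)"
proof -
  let ?f = "\<lambda>hs. K * prod_list hs"
  have "(\<Sum>hs\<in>H j L. F (?f hs)) = (\<Sum>t\<in>?f ` H j L. \<Sum>hs\<in>{hs \<in> H j L. ?f hs = t}. F (?f hs))"
    by (rule sum.image_gen[OF finite_H])
  also have "\<dots> = (\<Sum>t\<in>?f ` H j L. real (card {hs \<in> H j L. ?f hs = t}) * F t)"
    by (intro sum.cong refl) simp
  also have "\<dots> \<le> (\<Sum>t\<in>?f ` H j L. real (dcount t ^ j) * F t)"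
  proof (intro sum_mono mult_right_mono F0)
    fix t assume "t \<in> ?f ` H j L"
    then obtain hs where hs: "hs \<in> H j L" "t = ?f hs" by auto
    have "0 \<notin> set hs" using hs(1) unfolding H_def by auto
    hence "prod_list hs \<noteq> 0" by (simp add: prod_list_zero_iff)
    hence "prod_list hs > 0" by simp
    hence "t > 0" using hs K by simp
    thus "real (card {hs \<in> H j L. ?f hs = t}) \<le> real (dcount t ^ j)"
      using mult_count[of t j L K] by (simp only: of_nat_le_iff)
  qed
  also have "\<dots> \<le> (\<Sum>t\<in>{1..K * L ^ j}. real (dcount t ^ j) * F t)"
  proof (rule sum_mono2)
    show "?f ` H j L \<subseteq> {1..K * L ^ j}"
    proof
      fix t assume "t \<in> ?f ` H j L"
      then obtain hs where hs: "hs \<in> H j L" "t = ?f hs" by auto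
      have "0 \<notin> set hs" using hs(1) unfolding H_def by auto
    hence "prod_list hs \<noteq> 0" by (simp add: prod_list_zero_iff)
    hence "prod_list hs > 0" by simp
      moreover have "prod_list hs \<le> L ^ j"
      proof -
        have "\<forall>h\<in>set hs. h \<le> L" using hs(1) unfolding H_def by auto
        hence "prod_list hs \<le> L ^ length hs" by (induction hs) (auto intro: mult_le_mono)
        thus ?thesis using hs(1) unfolding H_def by simp
      qed
      ultimately show "t \<in> {1..K * L ^ j}" using hs K by (auto simp: Suc_le_eq)
    qed
  qed (use F0 in auto)
  finally show ?thesis .
qed




lemma prod_H_le: assumes "hs \<in> H j L" shows "prod_list hs \<le> L ^ j"
proof -
  have "\<forall>h\<in>set hs. h \<le> L" using assms unfolding H_def by auto
  hence "prod_list hs \<le> L ^ length hs" by (induction hs) (auto intro: mult_le_mono)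
  thus ?thesis using assms unfolding H_def by simp
qed

lemma inner_bound:
  fixes X k :: nat and hs :: "nat list" and P :: "real poly" and g :: "real \<Rightarrow> real"
    and D :: "nat \<Rightarrow> real \<Rightarrow> real" and G c2 :: real
  assumes X1: "X \<ge> 1" and k1: "k \<ge> 1" and degP: "degree P = k" and hsH: "hs \<in> H (k - 1) X"
    and Dg: "\<forall>x\<in>{real X..2 * real X}. D 0 x = g x"
    and Dder: "\<forall>r<k. \<forall>x\<in>{real X..2 * real X}. (D r has_real_derivative D (Suc r) x) (at x within {real X..2 * real X})"
    and Dk: "\<forall>x\<in>{real X..2 * real X}. \<bar>D k x\<bar> \<le> c2 * G * real X powr (- real k)"
    and c2: "c2 > 0" and G0: "G \<ge> 0"
    and phi: "\<phi> = (\<lambda>i. poly P (real (X + 1 + i)) + g (real (X + 1 + i)))"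
  shows "norm (W (X - sum_list hs) (difs hs \<phi>)) \<le> min_recip (real X) (real (fact k * prod_list hs) * lead_coeff P) * (1 + 2 * pi * (c2 * G))"
proof -
  define L' where "L' = X - sum_list hs"
  define \<beta> where "\<beta> = real (fact k * prod_list hs) * lead_coeff P"
  define f where "f = (\<lambda>x. poly P x + g x)"
  define \<delta> where "\<delta> i = rdif (1 # hs) g (real (X + 1 + i))" for i
  have lhs: "length hs = k - 1" using hsH unfolding H_def by simp
  have len: "length (1 # hs) = k" using lhs k1 by simp
  have \<psi>: "difs hs \<phi> i = rdif hs f (real (X + 1 + i))" for i
    by (rule difs_rdif) (simp add: phi f_def)
  have step: "difs hs \<phi> (Suc i) - difs hs \<phi> i = \<beta> + \<delta> i" if si: "Suc i < L'" for i
  proof -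
    define x where "x = real (X + 1 + i)"
    have "difs hs \<phi> (Suc i) - difs hs \<phi> i = rdif (1 # hs) f x"
      unfolding \<psi> x_def by (simp add: add.commute add.left_commute)
    also have "\<dots> = rdif (1 # hs) (poly P) x + rdif (1 # hs) g x"
      unfolding f_def by (rule rdif_add)
    also have "rdif (1 # hs) (poly P) x = \<beta>"
    proof -
      have "\<exists>\<xi>\<in>{x..x + real (sum_list (1 # hs))}. rdif (1 # hs) ((\<lambda>r. poly ((pderiv ^^ r) P)) 0) x
          = real (prod_list (1 # hs)) * (\<lambda>r. poly ((pderiv ^^ r) P)) (0 + length (1 # hs)) \<xi>"
        by (rule rdif_mvt) (auto intro!: has_field_derivative_at_within poly_DERIV)
      then obtain \<xi> where xi: "rdif (1 # hs) (poly ((pderiv ^^ 0) P)) x = real (prod_list (1 # hs)) * poly ((pderiv ^^ (0 + length (1 # hs))) P) \<xi>"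
        by blast
      have kk: "0 + length (1 # hs) = k" using len by simp
      have "rdif (1 # hs) (poly P) x = real (prod_list (1 # hs)) * poly ((pderiv ^^ k) P) \<xi>"
        using xi by (simp only: funpow_0 kk)
      thus ?thesis unfolding \<beta>_def poly_pderiv_iter_degree[OF degP] by simp
    qed
    also have "rdif (1 # hs) g x = \<delta> i" unfolding \<delta>_def x_def ..
    finally show ?thesis .
  qed
  have dbound: "\<bar>\<delta> i\<bar> \<le> real (prod_list hs) * (c2 * G * real X powr (- real k))" if si: "Suc i < L'" for i
  proof -
    define x where "x = real (X + 1 + i)"
    have xr: "real X \<le> x" "x + real (sum_list (1 # hs)) \<le> 2 * real X"
      using si unfolding x_def L'_def by auto
    have "rdif (1 # hs) g x = rdif (1 # hs) (D 0) x"
      by (rule rdif_cong) (use Dg xr in auto)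
    moreover have "\<exists>\<xi>\<in>{real X..2 * real X}. rdif (1 # hs) (D 0) x = real (prod_list (1 # hs)) * D (0 + length (1 # hs)) \<xi>"
      by (rule rdif_mvt) (use Dder len xr in auto)
    ultimately obtain \<xi> where xi: "\<xi> \<in> {real X..2 * real X}" "\<delta> i = real (prod_list hs) * D k \<xi>"
      unfolding \<delta>_def x_def[symmetric] using len by auto
    have "\<bar>\<delta> i\<bar> = real (prod_list hs) * \<bar>D k \<xi>\<bar>" unfolding xi(2) by (simp add: abs_mult)
    also have "\<dots> \<le> real (prod_list hs) * (c2 * G * real X powr (- real k))"
      using Dk xi(1) by (intro mult_left_mono) auto
    finally show ?thesis .
  qed
  have "norm (W L' (difs hs \<phi>)) \<le> min_recip (real X) \<beta> * (1 + 2 * pi * (\<Sum>i<L' - 1. \<bar>\<delta> i\<bar>))"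
    unfolding W_def by (rule expsum_bound) (use step L'_def in auto)
  also have "(\<Sum>i<L' - 1. \<bar>\<delta> i\<bar>) \<le> c2 * G"
  proof -
    have "(\<Sum>i<L' - 1. \<bar>\<delta> i\<bar>) \<le> (\<Sum>i<L' - 1. real (prod_list hs) * (c2 * G * real X powr (- real k)))"
      by (intro sum_mono dbound) auto
    also have "\<dots> = real (L' - 1) * real (prod_list hs) * (c2 * G * real X powr (- real k))" by simp
    also have "\<dots> \<le> real X * real X ^ (k - 1) * (c2 * G * real X powr (- real k))"
    proof (intro mult_right_mono mult_mono)
      show "real (L' - 1) \<le> real X" unfolding L'_def by simp
      show "real (prod_list hs) \<le> real X ^ (k - 1)" using prod_H_le[OF hsH] by (simp flip: of_nat_power)
    qed (use c2 G0 in auto)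
    also have "real X * real X ^ (k - 1) = real X powr real k"
      using X1 k1 by (simp add: powr_realpow power_Suc[symmetric] del: power_Suc)
    also have "real X powr real k * (c2 * G * real X powr (- real k)) = c2 * G"
      using X1 by (simp add: powr_minus field_simps)
    finally show ?thesis .
  qed
  hence "min_recip (real X) \<beta> * (1 + 2 * pi * (\<Sum>i<L' - 1. \<bar>\<delta> i\<bar>)) \<le> min_recip (real X) \<beta> * (1 + 2 * pi * (c2 * G))"
    by (intro mult_left_mono min_recip_nonneg) auto
  finally show ?thesis unfolding L'_def \<beta>_def .
qed




theorem lemma5p5:
  fixes k :: nat and \<epsilon> c1 c2 :: real
  assumes "k \<ge> 1" and "\<epsilon> > 0" and "c1 > 0" and "c2 > 0"
  shows "\<exists>C G0 X0. \<forall>(X::nat) (G::real) (P::real poly) (g::real \<Rightarrow> real) (D::nat \<Rightarrow> real \<Rightarrow> real).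
     real X \<ge> X0 \<longrightarrow> G \<ge> G0 \<longrightarrow> degree P = k \<longrightarrow>
     (\<forall>x\<in>{real X..2 * real X}. D 0 x = g x) \<longrightarrow>
     (\<forall>r<k. \<forall>x\<in>{real X..2 * real X}.
        (D r has_real_derivative D (Suc r) x) (at x within {real X..2 * real X})) \<longrightarrow>
     continuous_on {real X..2 * real X} (D k) \<longrightarrow>
     (\<forall>r\<in>{1..k}. \<forall>x\<in>{real X..2 * real X}.
        c1 * G * real X powr (- real r) \<le> \<bar>D r x\<bar> \<and>
        \<bar>D r x\<bar> \<le> c2 * G * real X powr (- real r)) \<longrightarrow>
     norm (\<Sum>n\<in>{X<..2*X}. e (poly P (real n) + g (real n))) ^ (2 ^ (k - 1))
       \<le> C * (real X ^ (2 ^ (k - 1) - 1)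
              + (1 + G) * real X powr (real (2 ^ (k - 1)) - real k + \<epsilon>)
                * (\<Sum>t\<in>{1..fact k * X ^ (k - 1)}. min_recip (real X) (real t * lead_coeff P)))"
proof -
  define j where "j = k - 1"
  have kj: "k = Suc j" using assms(1) unfolding j_def by simp
  obtain Cw where Cw: "Cw > 0" and Wit: "\<And>L \<phi>. (norm (W L \<phi>))^(2^j) \<le> Cw * (real L ^ (2^j - 1) + real L ^ (2^j - j - 1) *
      (\<Sum>hs\<in>H j L. norm (W (L - sum_list hs) (difs hs \<phi>))))"
    using weyl_iter[of j] by blast
  define \<delta> where "\<delta> = \<epsilon> / (real k * real k)"
  have \<delta>0: "\<delta> > 0" unfolding \<delta>_def using assms by simp
  obtain Cd where Cd: "Cd > 0" and dbd: "\<And>n. n \<ge> 1 \<Longrightarrow> real (dcount n) \<le> Cd * real n powr \<delta>"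
    using divisor_bound[OF \<delta>0] by blast
  define B where "B = Cd ^ j * fact k powr (\<delta> * real j)"
  have B0: "B \<ge> 0" unfolding B_def using Cd by simp
  define C where "C = Cw * (1 + (1 + 2 * pi * c2) * B)"
  show ?thesis
  proof (rule exI[of _ C], rule exI[of _ 0], rule exI[of _ 1], intro allI impI)
    fix X :: nat and G :: real and P :: "real poly" and g :: "real \<Rightarrow> real" and D :: "nat \<Rightarrow> real \<Rightarrow> real"
    assume X1': "1 \<le> real X" and G0: "0 \<le> G" and degP: "degree P = k"
      and Dg: "\<forall>x\<in>{real X..2 * real X}. D 0 x = g x"
      and Dder: "\<forall>r<k. \<forall>x\<in>{real X..2 * real X}. (D r has_real_derivative D (Suc r) x) (at x within {real X..2 * real X})"
      and Dcont: "continuous_on {real X..2 * real X} (D k)"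
      and Dbd: "\<forall>r\<in>{1..k}. \<forall>x\<in>{real X..2 * real X}. c1 * G * real X powr (- real r) \<le> \<bar>D r x\<bar> \<and> \<bar>D r x\<bar> \<le> c2 * G * real X powr (- real r)"
    have X1: "X \<ge> 1" using X1' by simp
    have Dk: "\<forall>x\<in>{real X..2 * real X}. \<bar>D k x\<bar> \<le> c2 * G * real X powr (- real k)"
      using Dbd assms(1) by auto
    define \<phi> where "\<phi> = (\<lambda>i. poly P (real (X + 1 + i)) + g (real (X + 1 + i)))"
    define m where "m t = min_recip (real X) (real t * lead_coeff P)" for t :: nat
    define T where "T = fact k * X ^ (k - 1)"
    have Tj: "T = fact k * X ^ j" unfolding T_def j_def ..
    define Sm where "Sm = (\<Sum>t\<in>{1..T}. m t)"
    have m0: "m t \<ge> 0" for t unfolding m_def by (rule min_recip_nonneg) simp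
    have Sm0: "Sm \<ge> 0" unfolding Sm_def using m0 by (simp add: sum_nonneg)
    have S_eq: "(\<Sum>n\<in>{X<..2*X}. e (poly P (real n) + g (real n))) = W X \<phi>"
      unfolding W_def \<phi>_def
      by (rule sum.reindex_bij_witness[where i="\<lambda>i. X + 1 + i" and j="\<lambda>n. n - (X + 1)"]) auto
    have inner: "(\<Sum>hs\<in>H j X. norm (W (X - sum_list hs) (difs hs \<phi>))) \<le> (1 + 2 * pi * (c2 * G)) * B * real X powr \<epsilon> * Sm"
    proof -
      have n1: "(\<Sum>hs\<in>H j X. norm (W (X - sum_list hs) (difs hs \<phi>))) \<le> (\<Sum>hs\<in>H j X. m (fact k * prod_list hs) * (1 + 2 * pi * (c2 * G)))"
        unfolding m_def
        by (intro sum_mono inner_bound[OF X1 assms(1) degP _ Dg Dder Dk assms(4) G0 \<phi>_def]) (simp add: j_def)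
      have n2: "(\<Sum>hs\<in>H j X. m (fact k * prod_list hs) * (1 + 2 * pi * (c2 * G))) = (1 + 2 * pi * (c2 * G)) * (\<Sum>hs\<in>H j X. m (fact k * prod_list hs))"
        by (simp add: sum_distrib_left mult.commute)
      have "(\<Sum>hs\<in>H j X. m (fact k * prod_list hs)) \<le> (\<Sum>t\<in>{1..fact k * X ^ j}. real (dcount t ^ j) * m t)"
        by (rule regroup[OF m0 _ X1]) simp
      also have "\<dots> \<le> (\<Sum>t\<in>{1..T}. B * real X powr \<epsilon> * m t)"
        unfolding Tj
      proof (rule sum_mono, rule mult_right_mono[OF _ m0])
        fix t assume t: "t \<in> {1..fact k * X ^ j}"
        have "1 \<le> T" using t unfolding Tj by (meson atLeastAtMost_iff order.trans)
        hence T1: "real T \<ge> 1" by simp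
        have "t \<le> T" using t unfolding Tj by simp
        hence tT: "real t \<le> real T" by (simp only: of_nat_le_iff)
        have "real (dcount t ^ j) = real (dcount t) ^ j" by simp
        also have "\<dots> \<le> (Cd * real t powr \<delta>) ^ j" using t by (intro power_mono dbd) auto
        also have "\<dots> \<le> (Cd * real T powr \<delta>) ^ j"
          using t Cd \<delta>0 tT by (intro power_mono mult_left_mono powr_mono2) auto
        also have "\<dots> = Cd ^ j * real T powr (\<delta> * real j)"
        proof -
          have "(real T powr \<delta>) ^ j = (real T powr \<delta>) powr real j" using T1 by (simp add: powr_realpow)
          also have "\<dots> = real T powr (\<delta> * real j)" by (simp add: powr_powr)
          finally show ?thesis by (simp add: power_mult_distrib)
        qed
        also have "real T powr (\<delta> * real j) = fact k powr (\<delta> * real j) * real X powr (real j * real j * \<delta>)"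
        proof -
          have "real T = fact k * real X powr real j" unfolding T_def j_def using X1
            by (simp add: powr_realpow)
          hence "real T powr (\<delta> * real j) = fact k powr (\<delta> * real j) * (real X powr real j) powr (\<delta> * real j)"
            by (simp add: powr_mult)
          thus ?thesis by (simp add: powr_powr mult_ac)
        qed
        also have "real X powr (real j * real j * \<delta>) \<le> real X powr \<epsilon>"
        proof (rule powr_mono[OF _ X1'])
          have "real j * real j \<le> real k * real k" unfolding kj by (intro mult_mono) auto
          hence "real j * real j * \<delta> \<le> real k * real k * \<delta>" using \<delta>0 by (intro mult_right_mono) auto
          also have "\<dots> = \<epsilon>" unfolding \<delta>_def using assms(1) by simp
          finally show "real j * real j * \<delta> \<le> \<epsilon>" .
        qed
        finally show "real (dcount t ^ j) \<le> B * real X powr \<epsilon>"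
          unfolding B_def using Cd by (simp add: mult_left_mono mult.assoc)
      qed
      also have "\<dots> = B * real X powr \<epsilon> * Sm" unfolding Sm_def by (simp add: sum_distrib_left)
      finally have n3: "(\<Sum>hs\<in>H j X. m (fact k * prod_list hs)) \<le> B * real X powr \<epsilon> * Sm" .
      have cpos: "1 + 2 * pi * (c2 * G) \<ge> 0" using G0 assms(4) by simp
      show ?thesis using n1 n2 mult_left_mono[OF n3 cpos] by (simp add: mult.assoc)
    qed
    have ex: "2 ^ (k - 1) - j - 1 = 2 ^ (k - 1) - k" unfolding j_def using assms(1) by simp
    have Kk: "k \<le> 2 ^ (k - 1)" using less_exp[of j] unfolding kj by (simp add: Suc_le_eq)
    have pw: "real X ^ (2 ^ (k - 1) - k) * real X powr \<epsilon> = real X powr (real (2 ^ (k - 1)) - real k + \<epsilon>)"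
    proof -
      have "real X ^ (2 ^ (k - 1) - k) = real X powr real (2 ^ (k - 1) - k)" using X1 by (simp add: powr_realpow)
      also have "real (2 ^ (k - 1) - k) = real (2 ^ (k - 1)) - real k" using Kk by (simp add: of_nat_diff)
      finally show ?thesis using X1 by (simp add: powr_add)
    qed
    have Gf: "1 + 2 * pi * (c2 * G) \<le> (1 + 2 * pi * c2) * (1 + G)"
      using G0 assms(4) pi_gt_zero by (simp add: algebra_simps)
    have Z: "real X ^ (2^j - j - 1) * (\<Sum>hs\<in>H j X. norm (W (X - sum_list hs) (difs hs \<phi>)))
        \<le> (1 + 2 * pi * c2) * B * ((1 + G) * real X powr (real (2 ^ (k - 1)) - real k + \<epsilon>) * Sm)"
    proof -
      have "real X ^ (2^j - j - 1) * (\<Sum>hs\<in>H j X. norm (W (X - sum_list hs) (difs hs \<phi>)))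
          \<le> real X ^ (2^j - j - 1) * ((1 + 2 * pi * (c2 * G)) * B * real X powr \<epsilon> * Sm)"
        using inner by (intro mult_left_mono) auto
      also have "real X ^ (2^j - j - 1) * ((1 + 2 * pi * (c2 * G)) * B * real X powr \<epsilon> * Sm)
          = (1 + 2 * pi * (c2 * G)) * B * (real X ^ (2 ^ (k - 1) - k) * real X powr \<epsilon>) * Sm"
        unfolding ex[unfolded j_def[symmetric]] j_def[symmetric] by (simp add: mult_ac)
      also have "\<dots> = (1 + 2 * pi * (c2 * G)) * (B * real X powr (real (2 ^ (k - 1)) - real k + \<epsilon>) * Sm)"
        unfolding pw by (simp add: mult_ac)
      also have "\<dots> \<le> ((1 + 2 * pi * c2) * (1 + G)) * (B * real X powr (real (2 ^ (k - 1)) - real k + \<epsilon>) * Sm)"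
        using Gf B0 Sm0 by (intro mult_right_mono) auto
      also have "\<dots> = (1 + 2 * pi * c2) * B * ((1 + G) * real X powr (real (2 ^ (k - 1)) - real k + \<epsilon>) * Sm)"
        by (simp add: mult_ac)
      finally show ?thesis .
    qed
    have "(norm (\<Sum>n\<in>{X<..2*X}. e (poly P (real n) + g (real n)))) ^ (2 ^ (k - 1))
        \<le> Cw * (real X ^ (2^j - 1) + real X ^ (2^j - j - 1) * (\<Sum>hs\<in>H j X. norm (W (X - sum_list hs) (difs hs \<phi>))))"
      unfolding S_eq j_def[symmetric] by (rule Wit)
    also have "\<dots> \<le> Cw * (real X ^ (2^j - 1) + (1 + 2 * pi * c2) * B * ((1 + G) * real X powr (real (2 ^ (k - 1)) - real k + \<epsilon>) * Sm))"
      using Cw Z by (intro mult_left_mono add_left_mono) auto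
    finally have fin: "(norm (\<Sum>n\<in>{X<..2*X}. e (poly P (real n) + g (real n)))) ^ (2 ^ (k - 1))
       \<le> Cw * (real X ^ (2 ^ (k - 1) - 1) + (1 + 2 * pi * c2) * B * ((1 + G) * real X powr (real (2 ^ (k - 1)) - real k + \<epsilon>) * Sm))"
      unfolding j_def by simp
    define Q where "Q = (1 + G) * real X powr (real (2 ^ (k - 1)) - real k + \<epsilon>) * Sm"
    have Q0: "Q \<ge> 0" unfolding Q_def using G0 Sm0 by simp
    have "Cw * (real X ^ (2 ^ (k - 1) - 1) + (1 + 2 * pi * c2) * B * Q) \<le> C * (real X ^ (2 ^ (k - 1) - 1) + Q)"
    proof -
      have a1: "Cw * real X ^ (2 ^ (k - 1) - 1) \<le> C * real X ^ (2 ^ (k - 1) - 1)"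
        unfolding C_def using Cw B0 assms(4) pi_gt_zero by (intro mult_right_mono) (auto simp: mult_le_cancel_left1)
      have a2: "Cw * ((1 + 2 * pi * c2) * B * Q) \<le> C * Q"
      proof -
        have "C * Q = Cw * Q + Cw * ((1 + 2 * pi * c2) * B * Q)" unfolding C_def by (simp add: algebra_simps)
        moreover have "Cw * Q \<ge> 0" using Cw Q0 by simp
        ultimately show ?thesis by linarith
      qed
      show ?thesis using a1 a2 by (simp add: algebra_simps)
    qed
    with fin show "(norm (\<Sum>n\<in>{X<..2*X}. e (poly P (real n) + g (real n)))) ^ (2 ^ (k - 1))
       \<le> C * (real X ^ (2 ^ (k - 1) - 1) + (1 + G) * real X powr (real (2 ^ (k - 1)) - real k + \<epsilon>)
            * (\<Sum>t\<in>{1..fact k * X ^ (k - 1)}. min_recip (real X) (real t * lead_coeff P)))"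
      unfolding Q_def Sm_def m_def T_def by simp
  qed
qed


end
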